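(* (i) Let $\alpha>\frac d2$. Then there exists $c>0$ such that, for any sufficiently large $A>0$, uniformly in $N\in\mathbb{N}$, \begin{align*} \Big|\int_{\mathbb{T}^d}(Y_N^\alpha)^3\Theta_N^\alpha\,dx\Big|&\le c\|Y_N^\alpha\|_{L^\infty}^6+\tfrac1{100}\|\Theta_N^\alpha\|_{L^2}^2,\\ \Big|\int_{\mathbb{T}^d}(Y_N^\alpha)^2(\Theta_N^\alpha)^2\,dx\Big|&\le c\|Y_N^\alpha\|_{L^\infty}^4+\tfrac1{100}\|\Theta_N^\alpha\|_{L^2}^4,\\ \Big|\int_{\mathbb{T}^d}Y_N^\alpha(\Theta_N^\alpha)^3\,dx\Big|&\le c\|Y_N^\alpha\|_{L^\infty}^4+\tfrac1{100}\|\Theta_N^\alpha\|_{L^4}^4,\\ \Big|\int_{\mathbb{T}^d}(\Theta_N^\alpha)^4\,dx\Big|&\le\tfrac1{100}\|\Theta_N^\alpha\|_{H^\alpha}^2+\tfrac{A}{100}\|\Theta_N^\alpha\|_{L^2}^{\frac{8\alpha-2d}{2\alpha-d}}. \end{align*} (ii) Let $A,\gamma>0$. Then there exists $c=c(A,\gamma)>0$ such that, uniformly in $N\in\mathbb{N}$, \[ A\Big\{\int_{\mathbb{T}^d}(Y_N^\alpha+\Theta_N^\alpha)^2dx\Big\}^\gamma\ge\frac A4\|\Theta_N^\alpha\|_{L^2}^{2\gamma}-c\|Y_N^\alpha\|_{L^\infty}^{2\gamma}. \]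
   Context: $\mathbb{T}^d=(\mathbb{R}/2\pi\mathbb{Z})^d$ with normalized Lebesgue measure; $e_n(x)=e^{in\cdot x}$, $\langle n\rangle=(1+|n|^2)^{1/2}$, $\langle\nabla\rangle=(1-\Delta)^{1/2}$, $\pi_Nf=\sum_{|n|\le N}\widehat f(n)e_n$, $\|f\|_{H^s}=\|\langle\nabla\rangle^sf\|_{L^2}$. $\{B_n\}$ are independent complex Brownian motions (modulo $B_{-n}=\overline{B_n}$) with $\mathrm{Var}(B_n(t))=t$, $B_0$ real; $W(t)=\sum_nB_n(t)e_n$, $Y^\alpha(t)=\langle\nabla\rangle^{-\alpha}W(t)$, $Y_N^\alpha=\pi_NY^\alpha(1)$. $\mathbb{H}_a$ is the space of progressively measurable processes belonging to $L^2([0,1];L^2(\mathbb{T}^d))$ almost surely; for $\theta\in\mathbb{H}_a$, $I^\alpha(\theta)(t)=\int_0^t\langle\nabla\rangle^{-\alpha}\theta(t')dt'$ and $\Theta_N^\alpha=\pi_NI^\alpha(\theta)(1)$. *)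

theory Defs
  imports "HOL-Analysis.Analysis"
begin

text \<open>The torus T^d is represented by the fundamental box [0,2pi]^d in real^'d,
  with normalized Lebesgue measure; d = CARD('d). Frequencies n live in int^'d.\<close>

definition torus_box :: "(real ^ 'd::finite) set" where
  "torus_box = {x. \<forall>i. 0 \<le> x $ i \<and> x $ i \<le> 2 * pi}"

definition torus_int :: "((real ^ 'd::finite) \<Rightarrow> 'b::{banach,second_countable_topology}) \<Rightarrow> 'b" where
  "torus_int f = (1 / (2 * pi) ^ CARD('d)) *\<^sub>R set_lebesgue_integral lborel torus_box f"

definition dotp :: "int ^ 'd::finite \<Rightarrow> real ^ 'd \<Rightarrow> real" where
  "dotp n x = (\<Sum>i\<in>UNIV. real_of_int (n $ i) * x $ i)"

definition jbr :: "int ^ 'd::finite \<Rightarrow> real" where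
  "jbr n = sqrt (1 + (\<Sum>i\<in>UNIV. (real_of_int (n $ i))\<^sup>2))"

definition freq_ball :: "nat \<Rightarrow> (int ^ 'd::finite) set" where
  "freq_ball N = {n. (\<Sum>i\<in>UNIV. (n $ i)\<^sup>2) \<le> (int N)\<^sup>2}"

definition en :: "int ^ 'd::finite \<Rightarrow> real ^ 'd \<Rightarrow> complex" where
  "en n x = cis (dotp n x)"

definition fourier_coeff :: "((real ^ 'd::finite) \<Rightarrow> real) \<Rightarrow> int ^ 'd \<Rightarrow> complex" where
  "fourier_coeff f n = torus_int (\<lambda>x. complex_of_real (f x) * cnj (en n x))"

text \<open>Trigonometric polynomial sum_{|n|<=N} c(n) e_n, as a real-valued function
  (the coefficient families used are Hermitian, so the sum is real)\<close>
definition trig_poly :: "nat \<Rightarrow> (int ^ 'd::finite \<Rightarrow> complex) \<Rightarrow> real ^ 'd \<Rightarrow> real" where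
  "trig_poly N c x = Re (\<Sum>n\<in>freq_ball N. c n * en n x)"

definition hermitian :: "(int ^ 'd::finite \<Rightarrow> complex) \<Rightarrow> bool" where
  "hermitian c \<longleftrightarrow> (\<forall>n. c (- n) = cnj (c n))"

definition bessel_pot :: "real \<Rightarrow> (int ^ 'd::finite \<Rightarrow> complex) \<Rightarrow> int ^ 'd \<Rightarrow> complex" where
  "bessel_pot s c n = complex_of_real (jbr n powr s) * c n"

definition Lp_norm :: "real \<Rightarrow> ((real ^ 'd::finite) \<Rightarrow> real) \<Rightarrow> real" where
  "Lp_norm p f = (torus_int (\<lambda>x. \<bar>f x\<bar> powr p)) powr (1 / p)"

text \<open>L^infinity norm; used only for trigonometric polynomials (continuous), where
  the essential supremum equals the supremum\<close>
definition Linf_norm :: "((real ^ 'd::finite) \<Rightarrow> real) \<Rightarrow> real" where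
  "Linf_norm f = (SUP x\<in>torus_box. \<bar>f x\<bar>)"

definition Hs_norm_tp :: "real \<Rightarrow> nat \<Rightarrow> (int ^ 'd::finite \<Rightarrow> complex) \<Rightarrow> real" where
  "Hs_norm_tp s N c = Lp_norm 2 (trig_poly N (bessel_pot s c))"

text \<open>Y_N^alpha = pi_N <nabla>^{-alpha} W(1), pathwise: b n = B_n(1)(omega)\<close>
definition Y_N :: "real \<Rightarrow> nat \<Rightarrow> (int ^ 'd::finite \<Rightarrow> complex) \<Rightarrow> real ^ 'd \<Rightarrow> real" where
  "Y_N \<alpha> N b = trig_poly N (bessel_pot (- \<alpha>) b)"

definition drift_coeff :: "(real \<Rightarrow> (real ^ 'd::finite) \<Rightarrow> real) \<Rightarrow> int ^ 'd \<Rightarrow> complex" where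
  "drift_coeff \<theta> n = set_lebesgue_integral lborel {0..1} (\<lambda>t. fourier_coeff (\<theta> t) n)"

text \<open>Fourier coefficients of Theta_N^alpha = pi_N I^alpha(theta)(1)\<close>
definition Theta_coeff :: "real \<Rightarrow> (real \<Rightarrow> (real ^ 'd::finite) \<Rightarrow> real) \<Rightarrow> int ^ 'd \<Rightarrow> complex" where
  "Theta_coeff \<alpha> \<theta> = bessel_pot (- \<alpha>) (drift_coeff \<theta>)"

definition Theta_N :: "real \<Rightarrow> nat \<Rightarrow> (real \<Rightarrow> (real ^ 'd::finite) \<Rightarrow> real) \<Rightarrow> real ^ 'd \<Rightarrow> real" where
  "Theta_N \<alpha> N \<theta> = trig_poly N (Theta_coeff \<alpha> \<theta>)"

text \<open>sample path of a process in H_a: theta in L^2([0,1] x T^d)\<close>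
definition drift_path :: "(real \<Rightarrow> (real ^ 'd::finite) \<Rightarrow> real) \<Rightarrow> bool" where
  "drift_path \<theta> \<longleftrightarrow> (\<lambda>(t, x). \<theta> t x) \<in> borel_measurable (lborel :: (real \<times> (real ^ 'd)) measure)
     \<and> set_integrable (lborel :: (real \<times> (real ^ 'd)) measure) ({0..1} \<times> torus_box) (\<lambda>(t, x). (\<theta> t x)\<^sup>2)"

end

theory Submission
  imports Defs "HOL-Analysis.Analysis"
begin


lemma integral_lborel_prod_Basis:
  fixes f :: "'a::euclidean_space \<Rightarrow> real \<Rightarrow> 'b::{real_normed_field,banach,second_countable_topology}"
  assumes int: "\<And>b. b \<in> Basis \<Longrightarrow> integrable lborel (f b)"
  shows "(\<integral>x. (\<Prod>b\<in>Basis. f b (x \<bullet> b)) \<partial>(lborel::'a measure)) = (\<Prod>b\<in>Basis. (\<integral>x. f b x \<partial>lborel))"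
proof -
  interpret product_sigma_finite "\<lambda>_::'a. lborel::real measure"
    by unfold_locales
  have meas: "\<And>b. b \<in> Basis \<Longrightarrow> f b \<in> borel_measurable borel"
    using int borel_measurable_integrable by fastforce
  have meas2: "\<And>b. b \<in> Basis \<Longrightarrow> (\<lambda>x::'a. f b (x \<bullet> b)) \<in> borel_measurable borel"
    by (rule measurable_compose[OF _ meas]) auto
  have "(\<integral>x. (\<Prod>b\<in>Basis. f b (x \<bullet> b)) \<partial>(lborel::'a measure))
     = (\<integral>g. (\<Prod>b\<in>Basis. f b ((\<Sum>c\<in>Basis. g c *\<^sub>R c) \<bullet> b)) \<partial>(\<Pi>\<^sub>M b\<in>Basis. lborel))"
    apply (subst lborel_eq)
    apply (subst integral_distr)
      apply (auto intro!: borel_measurable_prod meas2)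
    done
  also have "\<dots> = (\<integral>g. (\<Prod>b\<in>Basis. f b (g b)) \<partial>(\<Pi>\<^sub>M b\<in>Basis. lborel))"
  proof (rule Bochner_Integration.integral_cong[OF refl])
    fix g
    show "(\<Prod>b\<in>Basis. f b ((\<Sum>c\<in>Basis. g c *\<^sub>R c) \<bullet> b)) = (\<Prod>b\<in>Basis. f b (g b))"
    proof (rule prod.cong[OF refl])
    fix b :: 'a assume b: "b \<in> Basis"
    have "(\<Sum>c\<in>Basis. g c *\<^sub>R c) \<bullet> b = (\<Sum>c\<in>Basis. g c * (c \<bullet> b))"
      by (simp add: inner_sum_left)
    also have "\<dots> = g b"
      using b by (simp add: inner_Basis if_distrib sum.delta cong: if_cong)
    finally show "f b ((\<Sum>c\<in>Basis. g c *\<^sub>R c) \<bullet> b) = f b (g b)" by simp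
  qed
  qed
  also have "\<dots> = (\<Prod>b\<in>Basis. (\<integral>x. f b x \<partial>lborel))"
    by (rule product_integral_prod) (auto intro: int)
  finally show ?thesis .
qed
lemma Basis_vec_eq: "(Basis :: (real ^ 'd::finite) set) = (\<lambda>i. axis i 1) ` UNIV"
  unfolding Basis_vec_def by auto

lemma inj_axis1: "inj (\<lambda>i::'d::finite. axis i (1::real))"
  by (auto simp: inj_def axis_eq_axis)

lemma prod_Basis_vec:
  "(\<Prod>b\<in>(Basis :: (real ^ 'd::finite) set). F b) = (\<Prod>i\<in>UNIV. F (axis i 1))"
  unfolding Basis_vec_eq by (subst prod.reindex) (auto simp: inj_axis1)

lemma integral_lborel_prod_vec:
  fixes f :: "'d::finite \<Rightarrow> real \<Rightarrow> 'b::{real_normed_field,banach,second_countable_topology}"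
  assumes int: "\<And>i. integrable lborel (f i)"
  shows "(\<integral>x. (\<Prod>i\<in>UNIV. f i (x $ i)) \<partial>(lborel::(real^'d) measure)) = (\<Prod>i\<in>UNIV. (\<integral>x. f i x \<partial>lborel))"
proof -
  define F where "F b = f (SOME i. b = axis i 1)" for b :: "real^'d"
  have F: "F (axis i 1) = f i" for i
    unfolding F_def by (rule arg_cong[where f=f], rule some_equality) (auto simp: axis_eq_axis)
  have "(\<integral>x. (\<Prod>i\<in>UNIV. f i (x $ i)) \<partial>(lborel::(real^'d) measure))
      = (\<integral>x. (\<Prod>b\<in>Basis. F b (x \<bullet> b)) \<partial>(lborel::(real^'d) measure))"
    by (simp add: prod_Basis_vec F inner_axis)
  also have "\<dots> = (\<Prod>b\<in>(Basis::(real^'d) set). (\<integral>x. F b x \<partial>lborel))"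
    by (rule integral_lborel_prod_Basis) (auto simp: Basis_vec_eq F int)
  also have "\<dots> = (\<Prod>i\<in>UNIV. (\<integral>x. f i x \<partial>lborel))"
    by (simp add: prod_Basis_vec F)
  finally show ?thesis .
qed

lemma torus_box_eq: "torus_box = {x. \<forall>i. x $ i \<in> {0..2*pi}}"
  unfolding torus_box_def by auto

lemma indicator_torus_box: "indicator torus_box x = (\<Prod>i\<in>UNIV. indicator {0..2*pi} (x $ i) :: real)"
  unfolding torus_box_eq indicator_def by (auto simp: prod.neutral)  

lemma set_integral_torus_prod:
  fixes f :: "'d::finite \<Rightarrow> real \<Rightarrow> 'b::{real_normed_field,banach,second_countable_topology}"
  assumes int: "\<And>i. set_integrable lborel {0..2*pi} (f i)"
  shows "set_lebesgue_integral lborel (torus_box :: (real^'d) set) (\<lambda>x. \<Prod>i\<in>UNIV. f i (x $ i))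
     = (\<Prod>i\<in>UNIV. set_lebesgue_integral lborel {0..2*pi} (f i))"
proof -
  have "set_lebesgue_integral lborel (torus_box :: (real^'d) set) (\<lambda>x. \<Prod>i\<in>UNIV. f i (x $ i))
      = (\<integral>x. (\<Prod>i\<in>UNIV. indicator {0..2*pi} (x $ i) *\<^sub>R f i (x $ i)) \<partial>(lborel::(real^'d) measure))"
    unfolding set_lebesgue_integral_def indicator_torus_box
    by (simp add: scaleR_conv_of_real prod.distrib of_real_prod)
  also have "\<dots> = (\<Prod>i\<in>UNIV. set_lebesgue_integral lborel {0..2*pi} (f i))"
    unfolding set_lebesgue_integral_def
    by (rule integral_lborel_prod_vec) (use int in \<open>auto simp: set_integrable_def\<close>)
  finally show ?thesis .
qed

lemma cis_sum: "cis (sum f A) = (\<Prod>a\<in>A. cis (f a))"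
  by (induction A rule: infinite_finite_induct) (auto simp: cis_mult[symmetric])

lemma cis_int_deriv:
  fixes m :: int assumes "m \<noteq> 0"
  shows "((\<lambda>t. cis (of_int m * t) / (\<i> * of_int m)) has_vector_derivative cis (of_int m * t)) (at t within S)"
proof -
  have "((\<lambda>z. exp (\<i> * of_int m * z) / (\<i> * of_int m)) has_field_derivative exp (\<i> * of_int m * of_real t)) (at (of_real t))"
    using assms by (auto intro!: derivative_eq_intros)
  from has_vector_derivative_real_field[OF this]
  show ?thesis by (simp add: cis_conv_exp mult.assoc)
qed

lemma set_integrable_cis: "set_integrable lborel {0..2*pi} (\<lambda>t. cis (c * t))"
  unfolding set_integrable_def
  by (rule borel_integrable_compact) (auto intro!: continuous_intros)

lemma integral_cis_int:
  fixes m :: int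
  shows "set_lebesgue_integral lborel {0..2*pi} (\<lambda>t. cis (of_int m * t)) = (if m = 0 then complex_of_real (2*pi) else 0)"
proof (cases "m = 0")
  case True
  then show ?thesis by (simp add: set_integral_const scaleR_conv_of_real)
next
  case False
  have "set_lebesgue_integral lborel {0..2*pi} (\<lambda>t. cis (of_int m * t)) = (LBINT t=ereal 0..ereal (2*pi). cis (of_int m * t))"
    by (simp add: interval_integral_Icc)
  also have "\<dots> = cis (of_int m * (2*pi)) / (\<i> * of_int m) - cis (of_int m * 0) / (\<i> * of_int m)"
    by (rule interval_integral_FTC_finite) (use False in \<open>auto intro!: continuous_intros cis_int_deriv\<close>)
  also have "cis (of_int m * (2*pi)) = 1"
    using cis_multiple_2pi[of "of_int m"] by (simp add: mult_ac)
  finally show ?thesis using False by simp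
qed

lemma torus_box_cbox: "(torus_box :: (real^'d::finite) set) = cbox 0 (vec (2*pi))"
  unfolding torus_box_def by (auto simp: mem_box_cart)

lemma compact_torus_box: "compact (torus_box :: (real^'d::finite) set)"
  unfolding torus_box_cbox by (rule compact_cbox)

lemma zero_in_torus_box: "0 \<in> torus_box"
  unfolding torus_box_def by auto

lemma tint_integrable:
  fixes f :: "real^'d::finite \<Rightarrow> 'b::{banach,second_countable_topology}"
  assumes "continuous_on UNIV f"
  shows "set_integrable lborel torus_box f"
  unfolding set_integrable_def
  by (rule borel_integrable_compact[OF compact_torus_box]) (rule continuous_on_subset[OF assms], simp)

lemma set_integral_sum':
  fixes f :: "'i \<Rightarrow> 'a \<Rightarrow> 'b::{banach,second_countable_topology}"
  assumes "finite I" "\<And>i. i \<in> I \<Longrightarrow> set_integrable M A (f i)"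
  shows "set_lebesgue_integral M A (\<lambda>x. \<Sum>i\<in>I. f i x) = (\<Sum>i\<in>I. set_lebesgue_integral M A (f i))"
proof -
  have "(\<lambda>x. indicator A x *\<^sub>R (\<Sum>i\<in>I. f i x)) = (\<lambda>x. \<Sum>i\<in>I. indicator A x *\<^sub>R f i x)"
    by (simp add: scaleR_sum_right)
  then show ?thesis
    using assms unfolding set_lebesgue_integral_def set_integrable_def
    by (simp only:) (rule Bochner_Integration.integral_sum, auto)
qed

lemma tint_sum:
  fixes f :: "'i \<Rightarrow> real^'d::finite \<Rightarrow> 'b::{banach,second_countable_topology}"
  assumes "finite I" "\<And>i. i \<in> I \<Longrightarrow> continuous_on UNIV (f i)"
  shows "torus_int (\<lambda>x. \<Sum>i\<in>I. f i x) = (\<Sum>i\<in>I. torus_int (f i))"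
  unfolding torus_int_def
  by (subst set_integral_sum') (use assms in \<open>auto intro: tint_integrable simp: scaleR_sum_right\<close>)

lemma tint_cmult:
  fixes f :: "real^'d::finite \<Rightarrow> 'b::{real_normed_field,banach,second_countable_topology}"
  shows "torus_int (\<lambda>x. c * f x) = c * torus_int f"
  unfolding torus_int_def by simp

lemma tint_of_real:
  fixes f :: "real^'d::finite \<Rightarrow> real"
  shows "torus_int (\<lambda>x. complex_of_real (f x)) = complex_of_real (torus_int f)"
  unfolding torus_int_def set_integral_complex_of_real
  by (simp add: scaleR_conv_of_real)

lemma tint_mono:
  fixes f g :: "real^'d::finite \<Rightarrow> real"
  assumes "continuous_on UNIV f" "continuous_on UNIV g" "\<And>x. x \<in> torus_box \<Longrightarrow> f x \<le> g x"
  shows "torus_int f \<le> torus_int g"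
  unfolding torus_int_def
  by (auto intro!: divide_right_mono set_integral_mono tint_integrable assms)

lemma tint_add:
  fixes f g :: "real^'d::finite \<Rightarrow> real"
  assumes "continuous_on UNIV f" "continuous_on UNIV g"
  shows "torus_int (\<lambda>x. f x + g x) = torus_int f + torus_int g"
  unfolding torus_int_def
  by (subst set_integral_add) (auto intro!: tint_integrable assms simp: add_divide_distrib)

lemma set_integral_torus_const: "set_lebesgue_integral lborel (torus_box :: (real^'d::finite) set) (\<lambda>x. 1::real) = (2*pi) ^ CARD('d)"
proof -
  have "set_lebesgue_integral lborel (torus_box :: (real^'d::finite) set) (\<lambda>x. \<Prod>i\<in>UNIV. (\<lambda>i t. 1::real) i (x $ i)) = (\<Prod>i\<in>(UNIV::'d set). set_lebesgue_integral lborel {0..2*pi} (\<lambda>t. 1::real))"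
    by (rule set_integral_torus_prod) (auto simp: set_integrable_def intro!: borel_integrable_compact)
  then show ?thesis by (simp add: set_integral_const)
qed

lemma tint_const: "torus_int (\<lambda>x::real^'d::finite. (c::real)) = c"
proof -
  have "set_lebesgue_integral lborel (torus_box :: (real^'d::finite) set) (\<lambda>x. c * 1::real) = c * (2*pi) ^ CARD('d)"
    by (subst set_integral_mult_right) (simp add: set_integral_torus_const)
  then show ?thesis unfolding torus_int_def by simp
qed

lemma en_prod: "en k x = (\<Prod>i\<in>UNIV. cis (of_int (k $ i) * x $ i))"
  unfolding en_def dotp_def by (rule cis_sum)

lemma tint_en: "torus_int (en (k::int^'d::finite)) = (if k = 0 then 1 else 0)"
proof -
  have "set_lebesgue_integral lborel (torus_box :: (real^'d::finite) set) (en k)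
      = (\<Prod>i\<in>UNIV. set_lebesgue_integral lborel {0..2*pi} (\<lambda>t. cis (of_int (k $ i) * t)))"
    unfolding en_prod by (rule set_integral_torus_prod) (rule set_integrable_cis)
  also have "\<dots> = (\<Prod>i\<in>(UNIV::'d set). (if k $ i = 0 then complex_of_real (2*pi) else 0))"
    by (simp add: integral_cis_int)
  also have "\<dots> = (if k = 0 then complex_of_real (2*pi) ^ CARD('d) else 0)"
  proof (cases "k = 0")
    case True then show ?thesis by simp
  next
    case False
    then obtain i where "k $ i \<noteq> 0" by (auto simp: vec_eq_iff)
    then show ?thesis using False by (auto intro!: prod_zero)
  qed
  finally show ?thesis unfolding torus_int_def by (simp add: scaleR_conv_of_real)
qed

definition symc :: "(int^'d::finite \<Rightarrow> complex) \<Rightarrow> int^'d \<Rightarrow> complex" where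
  "symc c n = (c n + cnj (c (- n))) / 2"

lemma freq_ball_box: "freq_ball N \<subseteq> {n::int^'d::finite. \<forall>i. n $ i \<in> {- int N..int N}}"
proof safe
  fix n :: "int^'d" and i assume "n \<in> freq_ball N"
  then have "(\<Sum>j\<in>UNIV. (n $ j)\<^sup>2) \<le> (int N)\<^sup>2" by (simp add: freq_ball_def)
  moreover have "(n $ i)\<^sup>2 \<le> (\<Sum>j\<in>UNIV. (n $ j)\<^sup>2)"
    by (rule member_le_sum) auto
  ultimately have "(n $ i)\<^sup>2 \<le> (int N)\<^sup>2" by linarith
  then have "\<bar>n $ i\<bar> \<le> int N"
    using abs_le_square_iff[of "n $ i" "int N"] by simp
  then show "n $ i \<in> {- int N..int N}" by auto
qed

lemma box_eq_image: "{n::'a^'d::finite. \<forall>i. n $ i \<in> K} = vec_lambda ` (PiE UNIV (\<lambda>_. K))"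
proof safe
  fix n :: "'a^'d" assume "\<forall>i. n $ i \<in> K"
  then show "n \<in> vec_lambda ` (PiE UNIV (\<lambda>_. K))"
    by (intro image_eqI[where x="vec_nth n"]) auto
qed auto

lemma finite_box: "finite K \<Longrightarrow> finite {n::'a^'d::finite. \<forall>i. n $ i \<in> K}"
  unfolding box_eq_image by (auto intro!: finite_PiE)

lemma finite_freq_ball: "finite (freq_ball N :: (int^'d::finite) set)"
  by (rule finite_subset[OF freq_ball_box finite_box]) auto

lemma freq_ball_uminus: "(- n \<in> freq_ball N) = (n \<in> freq_ball N)"
  by (simp add: freq_ball_def)

lemma en_uminus: "en (- n) x = cnj (en n x)"
  by (simp add: en_def dotp_def cis_cnj sum_negf)

lemma en_mult_cnj: "en n x * cnj (en m x) = en (n - m) x"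
  by (simp add: en_def dotp_def cis_cnj cis_mult sum_subtractf[symmetric] algebra_simps)

lemma norm_en [simp]: "cmod (en n x) = 1"
  by (simp add: en_def)

lemma continuous_en: "continuous_on UNIV (en n)"
  unfolding en_def dotp_def by (auto intro!: continuous_intros)

lemma continuous_trig_poly: "continuous_on UNIV (trig_poly N c)"
  unfolding trig_poly_def by (auto intro!: continuous_intros continuous_on_compose2[OF continuous_en])

lemma of_real_Re_eq: "complex_of_real (Re z) = (z + cnj z) / 2"
  by (simp add: complex_eq_iff)

lemma trig_poly_complex:
  "complex_of_real (trig_poly N c x) = (\<Sum>n\<in>freq_ball N. symc c n * en n x)"
proof -
  have "cnj (\<Sum>n\<in>freq_ball N. c n * en n x) = (\<Sum>n\<in>freq_ball N. cnj (c n) * en (- n) x)"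
    by (simp add: en_uminus)
  also have "\<dots> = (\<Sum>n\<in>freq_ball N. cnj (c (- n)) * en n x)"
    by (rule sum.reindex_bij_witness[where i=uminus and j=uminus]) (auto simp: freq_ball_uminus)
  finally have "cnj (\<Sum>n\<in>freq_ball N. c n * en n x) = \<dots>" .
  then show ?thesis
    unfolding trig_poly_def of_real_Re_eq symc_def
    by (simp add: sum.distrib[symmetric] sum_divide_distrib algebra_simps)
qed

lemma trig_poly_bound: "\<bar>trig_poly N c x\<bar> \<le> (\<Sum>n\<in>freq_ball N. cmod (symc c n))"
proof -
  have "\<bar>trig_poly N c x\<bar> = cmod (complex_of_real (trig_poly N c x))" by simp
  also have "\<dots> \<le> (\<Sum>n\<in>freq_ball N. cmod (symc c n * en n x))"
    unfolding trig_poly_complex by (rule norm_sum)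
  finally show ?thesis by (simp add: norm_mult)
qed

lemma parseval:
  "torus_int (\<lambda>x::real^'d::finite. (trig_poly N c x)\<^sup>2) = (\<Sum>n\<in>freq_ball N. (cmod (symc c n))\<^sup>2)"
proof -
  let ?F = "freq_ball N :: (int^'d) set"
  have eq: "complex_of_real ((trig_poly N c x)\<^sup>2) =
      (\<Sum>n\<in>?F. \<Sum>m\<in>?F. (symc c n * cnj (symc c m)) * en (n - m) x)" for x
  proof -
    have "complex_of_real ((trig_poly N c x)\<^sup>2) = complex_of_real (trig_poly N c x) * cnj (complex_of_real (trig_poly N c x))"
      by (simp add: power2_eq_square)
    also have "\<dots> = (\<Sum>n\<in>?F. symc c n * en n x) * (\<Sum>m\<in>?F. cnj (symc c m) * cnj (en m x))"
      unfolding trig_poly_complex by simp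
    also have "\<dots> = (\<Sum>n\<in>?F. \<Sum>m\<in>?F. (symc c n * cnj (symc c m)) * (en n x * cnj (en m x)))"
      by (simp add: sum_product algebra_simps)
    finally show ?thesis by (simp add: en_mult_cnj)
  qed
  have "complex_of_real (torus_int (\<lambda>x::real^'d::finite. (trig_poly N c x)\<^sup>2))
      = torus_int (\<lambda>x. \<Sum>n\<in>?F. \<Sum>m\<in>?F. (symc c n * cnj (symc c m)) * en (n - m) x)"
    by (simp only: tint_of_real[symmetric] eq)
  also have "\<dots> = (\<Sum>n\<in>?F. \<Sum>m\<in>?F. (symc c n * cnj (symc c m)) * torus_int (en (n - m)))"
    by (simp add: tint_sum finite_freq_ball continuous_en tint_cmult continuous_intros)
  also have "\<dots> = (\<Sum>n\<in>?F. symc c n * cnj (symc c n))"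
    by (simp add: tint_en if_distrib sum.delta finite_freq_ball cong: if_cong)
  also have "\<dots> = complex_of_real (\<Sum>n\<in>?F. (cmod (symc c n))\<^sup>2)"
    by (simp add: complex_norm_square del: of_real_power)
  finally show ?thesis by (simp only: of_real_eq_iff)
qed


lemma powr_diff_bound:
  fixes y h s :: real
  assumes "0 < y" "0 < h" "1 < s"
  shows "(s - 1) * h * (y + h) powr (- s) \<le> y powr (1 - s) - (y + h) powr (1 - s)"
proof -
  have d: "\<And>x. y \<le> x \<Longrightarrow> x \<le> y+h \<Longrightarrow> DERIV (\<lambda>z. z powr (1-s)) x :> (1-s) * x powr ((1-s)-1)"
    using assms by (intro has_real_derivative_powr) auto
  have "\<exists>z. y < z \<and> z < y + h \<and> ((y+h) powr (1-s) - y powr (1-s) = ((y+h) - y) * ((1-s) * z powr ((1-s) - 1)))"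
    using MVT2[of y "y+h" "\<lambda>z. z powr (1-s)" "\<lambda>z. (1-s) * z powr ((1-s)-1)", OF _ d] assms by auto
  then obtain z where z: "y < z" "z < y + h" and eq: "(y+h) powr (1-s) - y powr (1-s) = h * ((1-s) * z powr (- s))"
    by auto
  have "(y + h) powr (- s) \<le> z powr (- s)"
    by (rule powr_mono2') (use assms z in auto)
  then have "(s - 1) * h * (y + h) powr (- s) \<le> (s - 1) * h * z powr (- s)"
    using assms by (intro mult_left_mono) auto
  also have "\<dots> = y powr (1 - s) - (y + h) powr (1 - s)"
    using eq by (simp add: algebra_simps)
  finally show ?thesis .
qed

lemma term_bound:
  fixes \<mu> s k :: real
  assumes "0 < \<mu>" "1 < s" "1 \<le> k"
  defines "\<Phi> \<equiv> \<lambda>x. 2 powr (s/2) / (s - 1) / \<mu> * (1 + \<mu> * x) powr (1 - s)"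
  shows "(1 + \<mu>\<^sup>2 * k\<^sup>2) powr (- s / 2) \<le> \<Phi> (k - 1) - \<Phi> k"
proof -
  let ?y = "1 + \<mu> * (k - 1)"
  have y: "0 < ?y" using assms by (auto intro!: add_pos_nonneg)
  have yh: "?y + \<mu> = 1 + \<mu> * k" by (simp add: algebra_simps)
  have A: "(s - 1) * \<mu> * (1 + \<mu> * k) powr (- s) \<le> ?y powr (1 - s) - (1 + \<mu> * k) powr (1 - s)"
    using powr_diff_bound[OF y assms(1) assms(2)] yh by simp
  have B: "(1 + \<mu>\<^sup>2 * k\<^sup>2) powr (- s / 2) \<le> 2 powr (s/2) * (1 + \<mu> * k) powr (- s)"
  proof -
    have pos: "0 < 1 + \<mu> * k" using assms by (auto intro!: add_pos_nonneg)
    have "(1 + \<mu> * k)\<^sup>2 \<le> 2 * (1 + \<mu>\<^sup>2 * k\<^sup>2)"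
    proof -
      have "0 \<le> (1 - \<mu> * k)\<^sup>2" by simp
      then show ?thesis by (simp add: power2_eq_square power_mult_distrib algebra_simps)
    qed
    then have "((1 + \<mu> * k)\<^sup>2) powr (s/2) \<le> (2 * (1 + \<mu>\<^sup>2 * k\<^sup>2)) powr (s/2)"
      using assms by (intro powr_mono2) auto
    moreover have "((1 + \<mu> * k)\<^sup>2) powr (s/2) = (1 + \<mu> * k) powr s"
    proof -
      have "((1 + \<mu> * k)\<^sup>2) powr (s/2) = ((1 + \<mu> * k) powr 2) powr (s/2)"
        using pos by (subst powr_numeral) auto
      also have "\<dots> = (1 + \<mu> * k) powr s" by (simp only: powr_powr) simp
      finally show ?thesis .
    qed
    moreover have "(2 * (1 + \<mu>\<^sup>2 * k\<^sup>2)) powr (s/2) = 2 powr (s/2) * (1 + \<mu>\<^sup>2 * k\<^sup>2) powr (s/2)"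
      by (rule powr_mult)
    ultimately have le: "(1 + \<mu> * k) powr s \<le> 2 powr (s/2) * (1 + \<mu>\<^sup>2 * k\<^sup>2) powr (s/2)"
      by simp
    have p1: "0 < (1 + \<mu> * k) powr s" using pos by simp
    have p3: "0 < 1 + \<mu>\<^sup>2 * k\<^sup>2" by (intro add_pos_nonneg) auto
    then have p2: "0 < (1 + \<mu>\<^sup>2 * k\<^sup>2) powr (s/2)" by simp
    have "(1 + \<mu>\<^sup>2 * k\<^sup>2) powr (- s / 2) = 1 / (1 + \<mu>\<^sup>2 * k\<^sup>2) powr (s/2)"
      by (simp add: powr_minus_divide[symmetric])
    also have "\<dots> \<le> 2 powr (s/2) / (1 + \<mu> * k) powr s"
      using le p1 p2 by (simp add: divide_simps mult.commute)
    also have "\<dots> = 2 powr (s/2) * (1 + \<mu> * k) powr (- s)"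
      by (simp add: powr_minus_divide)
    finally show ?thesis .
  qed
  have "\<Phi> (k - 1) - \<Phi> k = 2 powr (s/2) / (s - 1) / \<mu> * (?y powr (1 - s) - (1 + \<mu> * k) powr (1 - s))"
    unfolding \<Phi>_def by (simp add: algebra_simps)
  also have "\<dots> \<ge> 2 powr (s/2) / (s - 1) / \<mu> * ((s - 1) * \<mu> * (1 + \<mu> * k) powr (- s))"
    using A assms by (intro mult_left_mono) auto
  moreover have "2 powr (s/2) / (s - 1) / \<mu> * ((s - 1) * \<mu> * (1 + \<mu> * k) powr (- s)) = 2 powr (s/2) * (1 + \<mu> * k) powr (- s)"
    using assms by simp
  ultimately show ?thesis using B by linarith
qed

lemma sum_1D_nat:
  fixes \<mu> s :: real
  assumes "0 < \<mu>" "1 < s"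
  shows "(\<Sum>k\<in>{1..M}. (1 + \<mu>\<^sup>2 * (real k)\<^sup>2) powr (- s / 2)) \<le> 2 powr (s/2) / (s - 1) / \<mu>"
proof -
  define \<Phi> where "\<Phi> \<equiv> \<lambda>x::real. 2 powr (s/2) / (s - 1) / \<mu> * (1 + \<mu> * x) powr (1 - s)"
  have tel: "(\<Sum>k\<in>{1..M}. (1 + \<mu>\<^sup>2 * (real k)\<^sup>2) powr (- s / 2)) \<le> \<Phi> 0 - \<Phi> (real M)" for M
  proof (induction M)
    case 0 then show ?case by simp
  next
    case (Suc M)
    have "(1 + \<mu>\<^sup>2 * (real (Suc M))\<^sup>2) powr (- s / 2) \<le> \<Phi> (real (Suc M) - 1) - \<Phi> (real (Suc M))"
      unfolding \<Phi>_def by (rule term_bound) (use assms in auto)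
    then show ?case using Suc by simp
  qed
  have "0 \<le> \<Phi> (real M)" unfolding \<Phi>_def using assms by simp
  moreover have "\<Phi> 0 = 2 powr (s/2) / (s - 1) / \<mu>" unfolding \<Phi>_def by simp
  ultimately show ?thesis using tel[of M] by linarith
qed

lemma sum_int_sym:
  fixes g :: "int \<Rightarrow> 'a::comm_monoid_add"
  shows "(\<Sum>k\<in>{- int M..int M}. g k) = g 0 + (\<Sum>k\<in>{1..M}. g (int k) + g (- int k))"
proof (induction M)
  case 0 then show ?case by simp
next
  case (Suc M)
  have "{- int (Suc M)..int (Suc M)} = insert (int (Suc M)) (insert (- int (Suc M)) {- int M..int M})"
    by auto
  then have "(\<Sum>k\<in>{- int (Suc M)..int (Suc M)}. g k) = g (int (Suc M)) + (g (- int (Suc M)) + (\<Sum>k\<in>{- int M..int M}. g k))"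
    by simp
  then show ?case using Suc by (simp add: ac_simps)
qed

lemma sum_1D_int:
  fixes \<mu> s :: real
  assumes "0 < \<mu>" "\<mu> \<le> 1" "1 < s"
  shows "(\<Sum>k\<in>{- int M..int M}. (1 + \<mu>\<^sup>2 * (of_int k)\<^sup>2) powr (- s / 2)) \<le> (1 + 2 * (2 powr (s/2) / (s - 1))) / \<mu>"
proof -
  have "(\<Sum>k\<in>{- int M..int M}. (1 + \<mu>\<^sup>2 * (of_int k)\<^sup>2) powr (- s / 2))
     = 1 + 2 * (\<Sum>k\<in>{1..M}. (1 + \<mu>\<^sup>2 * (real k)\<^sup>2) powr (- s / 2))"
    by (subst sum_int_sym) (simp add: sum_distrib_left)
  also have "\<dots> \<le> 1 + 2 * (2 powr (s/2) / (s - 1) / \<mu>)"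
    using sum_1D_nat[OF assms(1,3), of M] by simp
  also have "\<dots> \<le> 1 / \<mu> + 2 * (2 powr (s/2) / (s - 1) / \<mu>)"
  proof -
    have "1 \<le> 1 / \<mu>" using assms by (simp add: field_simps)
    then show ?thesis by linarith
  qed
  also have "\<dots> = (1 + 2 * (2 powr (s/2) / (s - 1))) / \<mu>"
    by (simp add: add_divide_distrib)
  finally show ?thesis .
qed


lemma box_prod_sum:
  fixes \<phi> :: "int \<Rightarrow> real"
  assumes "finite K"
  shows "(\<Sum>n\<in>{n::int^'d::finite. \<forall>i. n $ i \<in> K}. \<Prod>i\<in>UNIV. \<phi> (n $ i)) = (\<Sum>k\<in>K. \<phi> k) ^ CARD('d)"
proof -
  have inj: "inj_on vec_lambda (PiE (UNIV::'d set) (\<lambda>_. K))"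
    by (auto simp: inj_on_def vec_lambda_inject)
  have "(\<Sum>n\<in>{n::int^'d::finite. \<forall>i. n $ i \<in> K}. \<Prod>i\<in>UNIV. \<phi> (n $ i))
      = (\<Sum>g\<in>PiE (UNIV::'d set) (\<lambda>_. K). \<Prod>i\<in>UNIV. \<phi> (g i))"
    unfolding box_eq_image by (subst sum.reindex[OF inj]) simp
  also have "\<dots> = (\<Prod>i\<in>(UNIV::'d set). \<Sum>k\<in>K. \<phi> k)"
    by (rule prod_sum_PiE[symmetric]) (use assms in auto)
  also have "\<dots> = (\<Sum>k\<in>K. \<phi> k) ^ CARD('d)" by simp
  finally show ?thesis .
qed

lemma jbr_pos: "0 < jbr n"
  unfolding jbr_def by (auto intro!: add_pos_nonneg sum_nonneg)

lemma jbr_ge1: "1 \<le> jbr n"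
  unfolding jbr_def by (auto intro!: sum_nonneg)

lemma jbr_uminus: "jbr (- n) = jbr n"
  unfolding jbr_def by simp

lemma recip_le_aux: "0 < (D::real) \<Longrightarrow> 0 < P \<Longrightarrow> P \<le> c * D \<Longrightarrow> 1 / D \<le> c / P"
  by (simp add: divide_simps mult.commute)

lemma pointwise_weight:
  fixes \<alpha> lam :: real and n :: "int^'d::finite"
  assumes "0 < \<alpha>" "0 < lam"
  defines "\<mu> \<equiv> lam powr (1 / (2*\<alpha>))"
  shows "1 / (1 + lam * jbr n powr (2*\<alpha>)) \<le> 2 powr \<alpha> * (\<Prod>i\<in>UNIV. (1 + \<mu>\<^sup>2 * (of_int (n $ i))\<^sup>2) powr (- (2*\<alpha>/CARD('d)) / 2))"
proof -
  define d where "d = real CARD('d)"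
  have d: "0 < d" unfolding d_def by simp
  define T where "T = (\<Sum>i\<in>UNIV. (real_of_int (n $ i))\<^sup>2)"
  have T: "0 \<le> T" unfolding T_def by (auto intro!: sum_nonneg)
  have mu: "0 < \<mu>" unfolding \<mu>_def using assms by simp
  have mu2: "\<mu>\<^sup>2 powr \<alpha> = lam"
  proof -
    have "\<mu>\<^sup>2 = \<mu> powr 2" using mu by simp
    then have "\<mu>\<^sup>2 powr \<alpha> = lam powr (1 / (2*\<alpha>) * 2 * \<alpha>)" unfolding \<mu>_def by (simp add: powr_powr)
    also have "1 / (2*\<alpha>) * 2 * \<alpha> = 1" using assms by simp
    finally show ?thesis using assms by simp
  qed
  define S where "S = \<mu>\<^sup>2 * (1 + T)"
  define t where "t = \<mu>\<^sup>2 * T"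
  have S: "0 \<le> S" "t \<le> S" "0 \<le> t" unfolding S_def t_def using T by (auto simp: algebra_simps)
  have w: "lam * jbr n powr (2*\<alpha>) = S powr \<alpha>"
  proof -
    have "jbr n powr (2*\<alpha>) = ((1 + T) powr (1/2)) powr (2*\<alpha>)"
      unfolding jbr_def T_def by (subst powr_half_sqrt) (auto intro!: add_nonneg_nonneg sum_nonneg)
    also have "\<dots> = (1 + T) powr \<alpha>" by (simp add: powr_powr)
    finally show ?thesis unfolding S_def using mu2 by (simp add: powr_mult)
  qed
  have step1: "(1 + S) powr \<alpha> \<le> 2 powr \<alpha> * (1 + S powr \<alpha>)"
  proof (cases "S \<le> 1")
    case True
    then have "(1 + S) powr \<alpha> \<le> 2 powr \<alpha>" using S assms by (intro powr_mono2) auto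
    then show ?thesis using S by (simp add: algebra_simps) (smt (verit) powr_ge_zero mult_nonneg_nonneg)
  next
    case False
    then have "(1 + S) powr \<alpha> \<le> (2 * S) powr \<alpha>" using S assms by (intro powr_mono2) auto
    also have "\<dots> = 2 powr \<alpha> * S powr \<alpha>" by (rule powr_mult)
    finally show ?thesis by (simp add: algebra_simps) (smt (verit) powr_ge_zero)
  qed
  have step2: "(1 + t) powr \<alpha> \<le> (1 + S) powr \<alpha>"
    using S assms by (intro powr_mono2) auto
  have prodle: "(\<Prod>i\<in>UNIV. (1 + \<mu>\<^sup>2 * (of_int (n $ i))\<^sup>2)) \<le> (1 + t) ^ CARD('d)"
  proof -
    have "(\<Prod>i\<in>UNIV. (1 + \<mu>\<^sup>2 * (of_int (n $ i))\<^sup>2)) \<le> (\<Prod>i\<in>(UNIV::'d set). (1 + t))"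
    proof (rule prod_mono, safe)
      fix i :: 'd
      show "0 \<le> 1 + \<mu>\<^sup>2 * (real_of_int (n $ i))\<^sup>2" by (intro add_nonneg_nonneg) auto
      have "(real_of_int (n $ i))\<^sup>2 \<le> T" unfolding T_def by (rule member_le_sum) auto
      then show "1 + \<mu>\<^sup>2 * (real_of_int (n $ i))\<^sup>2 \<le> 1 + t" unfolding t_def
        by (simp add: mult_left_mono)
    qed
    then show ?thesis by simp
  qed
  have step3: "(\<Prod>i\<in>UNIV. (1 + \<mu>\<^sup>2 * (of_int (n $ i))\<^sup>2) powr (\<alpha> / d)) \<le> (1 + t) powr \<alpha>"
  proof -
    have "(\<Prod>i\<in>UNIV. (1 + \<mu>\<^sup>2 * (of_int (n $ i))\<^sup>2) powr (\<alpha> / d)) = (\<Prod>i\<in>UNIV. (1 + \<mu>\<^sup>2 * (of_int (n $ i))\<^sup>2)) powr (\<alpha> / d)"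
      by (rule prod_powr_distrib[symmetric])
    also have "\<dots> \<le> ((1 + t) ^ CARD('d)) powr (\<alpha> / d)"
      using prodle assms d by (intro powr_mono2) (auto intro!: prod_nonneg add_nonneg_nonneg)
    also have "((1 + t) ^ CARD('d)) = (1 + t) powr d"
      unfolding d_def using S by (subst powr_realpow) auto
    also have "((1 + t) powr d) powr (\<alpha> / d) = (1 + t) powr \<alpha>"
      using d by (simp add: powr_powr)
    finally show ?thesis .
  qed
  define P where "P = (\<Prod>i\<in>UNIV. (1 + \<mu>\<^sup>2 * (of_int (n $ i))\<^sup>2) powr (\<alpha> / d))"
  have pp: "\<And>i. 0 < 1 + \<mu>\<^sup>2 * (real_of_int (n $ i))\<^sup>2" by (intro add_pos_nonneg) auto
  have P: "0 < P" unfolding P_def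
    by (intro prod_pos) (metis pp powr_gt_zero less_irrefl)
  have "P \<le> 2 powr \<alpha> * (1 + lam * jbr n powr (2*\<alpha>))"
    unfolding w using step1 step2 step3 P_def by linarith
  moreover have D: "0 < 1 + lam * jbr n powr (2*\<alpha>)"
    using assms by (intro add_pos_nonneg) auto
  ultimately have "1 / (1 + lam * jbr n powr (2*\<alpha>)) \<le> 2 powr \<alpha> / P"
    using P by (intro recip_le_aux) auto
  also have "2 powr \<alpha> / P = 2 powr \<alpha> * (\<Prod>i\<in>UNIV. (1 + \<mu>\<^sup>2 * (of_int (n $ i))\<^sup>2) powr (- (2*\<alpha>/CARD('d)) / 2))"
    unfolding P_def d_def by (simp add: powr_minus_divide prod_dividef)
  finally show ?thesis .
qed

lemma G_bound:
  fixes \<alpha> :: real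
  assumes "real CARD('d::finite) / 2 < \<alpha>"
  obtains CG where "CG > 0" "\<And>lam N. 0 < lam \<Longrightarrow> lam \<le> 1 \<Longrightarrow>
     (\<Sum>n\<in>(freq_ball N :: (int^'d) set). 1 / (1 + lam * jbr n powr (2*\<alpha>))) \<le> CG * lam powr (- (real CARD('d) / (2*\<alpha>)))"
proof -
  define d where "d = real CARD('d)"
  have d: "0 < d" unfolding d_def by simp
  have al: "0 < \<alpha>" using assms d unfolding d_def by linarith
  define s where "s = 2*\<alpha>/d"
  have s: "1 < s" unfolding s_def using assms d unfolding d_def by (simp add: field_simps)
  define C1 where "C1 = 1 + 2 * (2 powr (s/2) / (s - 1))"
  have C1: "0 < C1" unfolding C1_def using s by (intro add_pos_nonneg) auto
  define CG where "CG = 2 powr \<alpha> * C1 ^ CARD('d)"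
  have "CG > 0" unfolding CG_def using C1 by simp
  moreover have "(\<Sum>n\<in>(freq_ball N :: (int^'d) set). 1 / (1 + lam * jbr n powr (2*\<alpha>))) \<le> CG * lam powr (- (real CARD('d) / (2*\<alpha>)))"
    if lam: "0 < lam" "lam \<le> 1" for lam N
  proof -
    define \<mu> where "\<mu> = lam powr (1 / (2*\<alpha>))"
    have mu: "0 < \<mu>" "\<mu> \<le> 1" unfolding \<mu>_def using lam al by (auto intro: powr_le1)
    define \<phi> where "\<phi> k = (1 + \<mu>\<^sup>2 * (of_int k)\<^sup>2) powr (- s / 2)" for k :: int
    have phi: "0 \<le> \<phi> k" for k unfolding \<phi>_def by simp
    let ?B = "{n::int^'d. \<forall>i. n $ i \<in> {- int N..int N}}"
    have "(\<Sum>n\<in>(freq_ball N :: (int^'d) set). 1 / (1 + lam * jbr n powr (2*\<alpha>)))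
        \<le> (\<Sum>n\<in>(freq_ball N :: (int^'d) set). 2 powr \<alpha> * (\<Prod>i\<in>UNIV. \<phi> (n $ i)))"
      by (rule sum_mono) (use pointwise_weight[OF al lam(1)] in \<open>simp add: \<phi>_def \<mu>_def s_def d_def\<close>)
    also have "\<dots> \<le> (\<Sum>n\<in>?B. 2 powr \<alpha> * (\<Prod>i\<in>UNIV. \<phi> (n $ i)))"
    proof (rule sum_mono2)
      show "finite ?B" by (rule finite_box) simp
      show "freq_ball N \<subseteq> ?B" by (rule freq_ball_box)
      show "0 \<le> 2 powr \<alpha> * (\<Prod>i\<in>UNIV. \<phi> (b $ i))" for b
        by (intro mult_nonneg_nonneg prod_nonneg) (auto intro: phi)
    qed
    also have "\<dots> = 2 powr \<alpha> * (\<Sum>k\<in>{- int N..int N}. \<phi> k) ^ CARD('d)"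
      by (simp only: sum_distrib_left[symmetric] box_prod_sum[OF finite_atLeastAtMost_int])
    also have "\<dots> \<le> 2 powr \<alpha> * (C1 / \<mu>) ^ CARD('d)"
      using sum_1D_int[OF mu s, of N]
      by (intro mult_left_mono power_mono) (auto simp: \<phi>_def C1_def intro!: sum_nonneg)
    also have "\<dots> = CG * (1 / \<mu> ^ CARD('d))"
      unfolding CG_def by (simp add: power_divide)
    also have "1 / \<mu> ^ CARD('d) = lam powr (- (real CARD('d) / (2*\<alpha>)))"
    proof -
      have "\<mu> ^ CARD('d) = lam powr (1 / (2*\<alpha>) * real CARD('d))"
        unfolding \<mu>_def using lam by (simp add: powr_power)
      then show ?thesis by (simp add: powr_minus_divide)
    qed
    finally show ?thesis .
  qed
  ultimately show ?thesis using that by blast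
qed


lemma interp_abstract:
  fixes b v :: "'a \<Rightarrow> real" and CG \<theta> :: real
  assumes F: "finite F" and b: "\<And>n. n \<in> F \<Longrightarrow> 0 \<le> b n"
    and v: "\<And>n. n \<in> F \<Longrightarrow> 0 < v n" "\<And>n. n \<in> F \<Longrightarrow> v n \<le> 1"
    and CG: "0 < CG" and th: "0 < \<theta>" "\<theta> < 1"
    and G: "\<And>lam. 0 < lam \<Longrightarrow> lam \<le> 1 \<Longrightarrow> (\<Sum>n\<in>F. (v n)\<^sup>2 / ((v n)\<^sup>2 + lam)) \<le> CG * lam powr (- \<theta>)"
  shows "(\<Sum>n\<in>F. b n * v n)\<^sup>2 \<le> 2 * CG * (\<Sum>n\<in>F. (b n * v n)\<^sup>2) powr (1 - \<theta>) * (\<Sum>n\<in>F. (b n)\<^sup>2) powr \<theta>"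
proof -
  define P where "P = (\<Sum>n\<in>F. (b n * v n)\<^sup>2)"
  define Q where "Q = (\<Sum>n\<in>F. (b n)\<^sup>2)"
  have P0: "0 \<le> P" unfolding P_def by (auto intro: sum_nonneg)
  have PQ: "P \<le> Q" unfolding P_def Q_def
  proof (rule sum_mono)
    fix n assume n: "n \<in> F"
    have "(v n)\<^sup>2 \<le> 1" using v[OF n] by (simp add: power_le_one)
    then have "(b n)\<^sup>2 * (v n)\<^sup>2 \<le> (b n)\<^sup>2 * 1" by (intro mult_left_mono) auto
    then show "(b n * v n)\<^sup>2 \<le> (b n)\<^sup>2" by (simp add: power_mult_distrib)
  qed
  show ?thesis
  proof (cases "P = 0")
    case True
    then have "\<forall>n\<in>F. (b n * v n)\<^sup>2 = 0" unfolding P_def using F by (subst sum_nonneg_eq_0_iff[symmetric]) auto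
    then have "\<forall>n\<in>F. b n * v n = 0" by simp
    then have "(\<Sum>n\<in>F. b n * v n) = 0" by (rule sum.neutral)
    then show ?thesis using True unfolding P_def by simp
  next
    case False
    then have P: "0 < P" using P0 by simp
    then have Q: "0 < Q" using PQ by simp
    define lam where "lam = P / Q"
    have lam: "0 < lam" "lam \<le> 1" unfolding lam_def using P Q PQ by auto
    have "(\<Sum>n\<in>F. b n * v n)\<^sup>2 = (\<Sum>n\<in>F. (b n * sqrt ((v n)\<^sup>2 + lam)) * (v n / sqrt ((v n)\<^sup>2 + lam)))\<^sup>2"
    proof -
      have "b n * sqrt ((v n)\<^sup>2 + lam) * (v n / sqrt ((v n)\<^sup>2 + lam)) = b n * v n" if "n \<in> F" for n
      proof -
        have "0 < sqrt ((v n)\<^sup>2 + lam)" using lam by (simp add: add_nonneg_pos)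
        then show ?thesis by simp
      qed
      then show ?thesis by (simp cong: sum.cong)
    qed
    also have "\<dots> \<le> (\<Sum>n\<in>F. (b n * sqrt ((v n)\<^sup>2 + lam))\<^sup>2) * (\<Sum>n\<in>F. (v n / sqrt ((v n)\<^sup>2 + lam))\<^sup>2)"
      by (rule Cauchy_Schwarz_ineq_sum)
    also have "(\<Sum>n\<in>F. (b n * sqrt ((v n)\<^sup>2 + lam))\<^sup>2) = P + lam * Q"
    proof -
      have "(b n * sqrt ((v n)\<^sup>2 + lam))\<^sup>2 = (b n * v n)\<^sup>2 + lam * (b n)\<^sup>2" for n
        using lam by (simp add: power_mult_distrib algebra_simps add_nonneg_pos)
      then show ?thesis unfolding P_def Q_def by (simp add: sum.distrib sum_distrib_left)
    qed
    also have "(\<Sum>n\<in>F. (v n / sqrt ((v n)\<^sup>2 + lam))\<^sup>2) = (\<Sum>n\<in>F. (v n)\<^sup>2 / ((v n)\<^sup>2 + lam))"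
      using lam by (intro sum.cong refl) (simp add: power_divide add_nonneg_pos)
    also have "(P + lam * Q) * \<dots> \<le> (P + lam * Q) * (CG * lam powr (- \<theta>))"
      using G[OF lam] P Q lam by (intro mult_left_mono) auto
    also have "P + lam * Q = 2 * P" unfolding lam_def using Q by simp
    also have "2 * P * (CG * lam powr (- \<theta>)) = 2 * CG * P powr (1 - \<theta>) * Q powr \<theta>"
    proof -
      have "lam powr (- \<theta>) = P powr (- \<theta>) * Q powr \<theta>"
        unfolding lam_def using P Q by (simp add: powr_divide powr_minus_divide)
      moreover have "P * P powr (- \<theta>) = P powr (1 - \<theta>)"
        using P by (simp add: powr_add[symmetric] powr_mult_base)
      ultimately show ?thesis by (simp add: algebra_simps)
    qed
    finally show ?thesis unfolding P_def Q_def .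
  qed
qed

lemma young_step:
  fixes K P Q \<theta> :: real
  assumes K: "0 < K" and th: "0 < \<theta>" "\<theta> < 1" and P: "0 \<le> P" and Q: "0 \<le> Q"
  shows "K * P powr (2 - \<theta>) * Q powr \<theta> \<le> Q / 100 + (K * 100 powr \<theta>) powr (1 / (1 - \<theta>)) * P powr ((2 - \<theta>) / (1 - \<theta>))"
proof (cases "P = 0 \<or> Q = 0")
  case True
  then show ?thesis using P Q by auto
next
  case False
  then have P: "0 < P" and Q: "0 < Q" using P Q by auto
  define Y where "Y = (K * 100 powr \<theta> * P powr (2 - \<theta>)) powr (1 / (1 - \<theta>))"
  have Y: "0 < Y" unfolding Y_def using K P by simp
  have "K * P powr (2 - \<theta>) * Q powr \<theta> = (Q / 100) powr \<theta> * Y powr (1 - \<theta>)"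
  proof -
    have "Y powr (1 - \<theta>) = K * 100 powr \<theta> * P powr (2 - \<theta>)"
      unfolding Y_def using th K P by (simp add: powr_powr)
    moreover have "(Q / 100) powr \<theta> = Q powr \<theta> / 100 powr \<theta>"
      using Q by (simp add: powr_divide)
    ultimately show ?thesis by simp
  qed
  also have "\<dots> \<le> \<theta> * (Q / 100) + (1 - \<theta>) * Y"
    by (rule Youngs_inequality_0) (use th Q Y in auto)
  also have "\<dots> \<le> Q / 100 + Y"
    using th Q Y by (smt (verit) mult_left_le_one_le divide_nonneg_pos mult_nonneg_nonneg)
  also have "Y = (K * 100 powr \<theta>) powr (1 / (1 - \<theta>)) * P powr ((2 - \<theta>) / (1 - \<theta>))"
    unfolding Y_def using K P by (simp add: powr_mult powr_powr)
  finally show ?thesis .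
qed


lemma tint_abs_le:
  fixes g h :: "real^'d::finite \<Rightarrow> real"
  assumes "continuous_on UNIV g" "continuous_on UNIV h" "\<And>x. x \<in> torus_box \<Longrightarrow> \<bar>g x\<bar> \<le> h x"
  shows "\<bar>torus_int g\<bar> \<le> torus_int h"
proof -
  have 1: "torus_int g \<le> torus_int h"
    by (rule tint_mono) (use assms in \<open>auto dest: abs_le_D1\<close>)
  have "torus_int (\<lambda>x. (-1) * g x) \<le> torus_int h"
    by (rule tint_mono) (use assms in \<open>auto intro!: continuous_intros dest: abs_le_D2\<close>)
  moreover have "torus_int (\<lambda>x. (-1) * g x) = - torus_int g"
    by (subst tint_cmult) simp
  ultimately have "- torus_int g \<le> torus_int h" by simp
  with 1 show ?thesis by linarith
qed

lemma tint_nonneg: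
  fixes f :: "real^'d::finite \<Rightarrow> real"
  assumes "continuous_on UNIV f" "\<And>x. x \<in> torus_box \<Longrightarrow> 0 \<le> f x"
  shows "0 \<le> torus_int f"
  using tint_mono[of "\<lambda>_. 0" f] assms by (simp add: tint_const)

lemma linf_le:
  assumes "x \<in> torus_box"
  shows "\<bar>trig_poly N c x\<bar> \<le> Linf_norm (trig_poly N c :: real^'d::finite \<Rightarrow> real)"
  unfolding Linf_norm_def
  by (rule cSUP_upper[OF assms]) (auto intro!: bdd_aboveI2[where M="\<Sum>n\<in>freq_ball N. cmod (symc c n)"] trig_poly_bound)

lemma linf_nonneg: "0 \<le> Linf_norm (trig_poly N c :: real^'d::finite \<Rightarrow> real)"
  using linf_le[OF zero_in_torus_box, of N c] by linarith

lemma Lp2_eq: "Lp_norm 2 f = (torus_int (\<lambda>x. (f x)\<^sup>2)) powr (1/2)"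
  unfolding Lp_norm_def by simp

lemma Lp4_eq: "Lp_norm 4 f = (torus_int (\<lambda>x. (f x) ^ 4)) powr (1/4)"
  unfolding Lp_norm_def by (simp add: power_even_abs)

lemma powr_inv_pow: "0 \<le> (x::real) \<Longrightarrow> 0 < n \<Longrightarrow> (x powr (1 / real n)) ^ n = x"
  by (cases "x = 0") (auto simp: powr_power)

lemma symc_bessel: "symc (bessel_pot s c) n = complex_of_real (jbr n powr s) * symc c n"
  unfolding symc_def bessel_pot_def by (simp add: jbr_uminus algebra_simps)

lemma bessel_inv: "bessel_pot \<alpha> (bessel_pot (- \<alpha>) c) = (c :: int^'d::finite \<Rightarrow> complex)"
proof
  fix n :: "int^'d"
  have "jbr n powr \<alpha> * jbr n powr (- \<alpha>) = 1"
    using jbr_pos[of n] by (simp add: powr_add[symmetric])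
  then show "bessel_pot \<alpha> (bessel_pot (- \<alpha>) c) n = c n"
    unfolding bessel_pot_def by (simp flip: of_real_mult mult.assoc)
qed


lemma part_ii:
  fixes \<alpha> A \<gamma> :: real
  assumes A: "A > 0" and g: "\<gamma> > 0"
  shows "\<exists>c>0. \<forall>(N::nat) (b :: int ^ 'd::finite \<Rightarrow> complex) (\<theta> :: real \<Rightarrow> real ^ 'd \<Rightarrow> real).
        hermitian b \<and> drift_path \<theta> \<longrightarrow>
        (let Y = Y_N \<alpha> N b; \<Theta> = Theta_N \<alpha> N \<theta> in
          A * (torus_int (\<lambda>x. (Y x + \<Theta> x) ^ 2)) powr \<gamma>
            \<ge> A / 4 * Lp_norm 2 \<Theta> powr (2 * \<gamma>) - c * Linf_norm Y powr (2 * \<gamma>))"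
proof -
  define q where "q = (4::real) powr (- 1 / \<gamma>)"
  have q0: "0 < q" unfolding q_def by simp
  have "1 < (4::real) powr (1 / \<gamma>)" using g by (intro gr_one_powr) auto
  then have q1: "q < 1" unfolding q_def by (simp add: powr_minus_divide divide_simps)
  have qg: "q powr \<gamma> = 1 / 4"
  proof -
    have "q powr \<gamma> = 4 powr (- 1 / \<gamma> * \<gamma>)" unfolding q_def by (rule powr_powr)
    also have "- 1 / \<gamma> * \<gamma> = - 1" using g by simp
    also have "(4::real) powr - 1 = 1 / 4" by (simp add: powr_minus_divide)
    finally show ?thesis .
  qed
  define \<epsilon> where "\<epsilon> = (1 - q) / 2"
  have e: "0 < \<epsilon>" "\<epsilon> < 1" unfolding \<epsilon>_def using q0 q1 by auto
  define c where "c = A / 4 * (1 / \<epsilon>\<^sup>2) powr \<gamma> + 1"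
  have c: "c > 0" unfolding c_def using A by (simp add: add_nonneg_pos)
  show ?thesis
  proof (intro exI[of _ c] conjI allI impI c)
    fix N :: nat and b :: "int ^ 'd \<Rightarrow> complex" and \<theta> :: "real \<Rightarrow> real ^ 'd \<Rightarrow> real"
    define Y where "Y = Y_N \<alpha> N b"
    define \<Theta> where "\<Theta> = Theta_N \<alpha> N \<theta>"
    define L where "L = Linf_norm Y"
    define P where "P = torus_int (\<lambda>x. (\<Theta> x)\<^sup>2)"
    define I where "I = torus_int (\<lambda>x. (Y x + \<Theta> x) ^ 2)"
    have cY: "continuous_on UNIV Y" unfolding Y_def Y_N_def by (rule continuous_trig_poly)
    have cT: "continuous_on UNIV \<Theta>" unfolding \<Theta>_def Theta_N_def by (rule continuous_trig_poly)
    have L0: "0 \<le> L" unfolding L_def Y_def Y_N_def by (rule linf_nonneg)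
    have YL: "\<bar>Y x\<bar> \<le> L" if "x \<in> torus_box" for x
      unfolding L_def Y_def Y_N_def by (rule linf_le[OF that])
    have P0: "0 \<le> P" unfolding P_def by (rule tint_nonneg) (auto intro!: continuous_intros cT)
    have I0: "0 \<le> I" unfolding I_def by (rule tint_nonneg) (auto intro!: continuous_intros cT cY)
    have pw: "(1 - \<epsilon>) * (\<Theta> x)\<^sup>2 + (- (L\<^sup>2 / \<epsilon>)) \<le> (Y x + \<Theta> x) ^ 2" if "x \<in> torus_box" for x
    proof -
      have "0 \<le> \<epsilon> * (\<Theta> x + Y x / \<epsilon>)\<^sup>2" using e by simp
      also have "\<epsilon> * (\<Theta> x + Y x / \<epsilon>)\<^sup>2 = \<epsilon> * (\<Theta> x)\<^sup>2 + 2 * Y x * \<Theta> x + (Y x)\<^sup>2 / \<epsilon>"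
        using e by (simp add: power2_eq_square field_simps)
      finally have 1: "0 \<le> \<epsilon> * (\<Theta> x)\<^sup>2 + 2 * Y x * \<Theta> x + (Y x)\<^sup>2 / \<epsilon>" .
      have "(Y x)\<^sup>2 \<le> L\<^sup>2" using YL[OF that] L0 by (simp add: abs_le_square_iff[symmetric])
      then have 2: "(Y x)\<^sup>2 / \<epsilon> \<le> L\<^sup>2 / \<epsilon>" using e by (simp add: divide_right_mono)
      have 3: "(Y x + \<Theta> x) ^ 2 = (Y x)\<^sup>2 + 2 * Y x * \<Theta> x + (\<Theta> x)\<^sup>2"
        by (simp add: power2_eq_square algebra_simps)
      show ?thesis using 1 2 3 by (simp add: algebra_simps)
    qed
    have IP: "(1 - \<epsilon>) * P - L\<^sup>2 / \<epsilon> \<le> I"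
    proof -
      have "torus_int (\<lambda>x. (1 - \<epsilon>) * (\<Theta> x)\<^sup>2 + (- (L\<^sup>2 / \<epsilon>))) \<le> I"
        unfolding I_def by (rule tint_mono) (use pw in \<open>auto intro!: continuous_intros cT cY\<close>)
      moreover have "torus_int (\<lambda>x. (1 - \<epsilon>) * (\<Theta> x)\<^sup>2 + (- (L\<^sup>2 / \<epsilon>))) = (1 - \<epsilon>) * P - L\<^sup>2 / \<epsilon>"
        by (subst tint_add) (auto intro!: continuous_intros cT simp: tint_cmult tint_const P_def)
      ultimately show ?thesis by simp
    qed
    have LHS: "Lp_norm 2 \<Theta> powr (2 * \<gamma>) = P powr \<gamma>"
      unfolding Lp2_eq P_def by (simp add: powr_powr)
    have RHS: "Linf_norm Y powr (2 * \<gamma>) = (L\<^sup>2) powr \<gamma>"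
    proof -
      have "L\<^sup>2 = L powr 2" using L0 by simp
      then have "(L\<^sup>2) powr \<gamma> = L powr (2 * \<gamma>)" by (simp only: powr_powr)
      then show ?thesis unfolding L_def by simp
    qed
    have "A / 4 * P powr \<gamma> - c * (L\<^sup>2) powr \<gamma> \<le> A * I powr \<gamma>"
    proof (cases "L\<^sup>2 / \<epsilon>\<^sup>2 \<le> P")
      case True
      then have "L\<^sup>2 / \<epsilon> \<le> \<epsilon> * P" using e by (simp add: field_simps power2_eq_square)
      then have "q * P \<le> I" using IP unfolding \<epsilon>_def by (simp add: field_simps)
      then have "(q * P) powr \<gamma> \<le> I powr \<gamma>" using q0 P0 g by (intro powr_mono2) auto
      then have "P powr \<gamma> / 4 \<le> I powr \<gamma>" using q0 P0 by (simp add: powr_mult qg)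
      then have "A / 4 * P powr \<gamma> \<le> A * I powr \<gamma>" using A by simp
      moreover have "0 \<le> c * (L\<^sup>2) powr \<gamma>" using c by simp
      ultimately show ?thesis by linarith
    next
      case False
      then have "P powr \<gamma> \<le> (L\<^sup>2 / \<epsilon>\<^sup>2) powr \<gamma>" using P0 g by (intro powr_mono2) auto
      also have "\<dots> = (1 / \<epsilon>\<^sup>2) powr \<gamma> * (L\<^sup>2) powr \<gamma>"
        by (simp add: powr_mult[symmetric])
      finally have "A / 4 * P powr \<gamma> \<le> A / 4 * ((1 / \<epsilon>\<^sup>2) powr \<gamma> * (L\<^sup>2) powr \<gamma>)"
        using A by simp
      also have "\<dots> \<le> c * (L\<^sup>2) powr \<gamma>"
        unfolding c_def by (simp add: algebra_simps)
      finally have "A / 4 * P powr \<gamma> - c * (L\<^sup>2) powr \<gamma> \<le> 0" by simp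
      also have "0 \<le> A * I powr \<gamma>" using A by simp
      finally show ?thesis .
    qed
    then show "(let Y = Y_N \<alpha> N b; \<Theta> = Theta_N \<alpha> N \<theta> in
          A * (torus_int (\<lambda>x. (Y x + \<Theta> x) ^ 2)) powr \<gamma>
            \<ge> A / 4 * Lp_norm 2 \<Theta> powr (2 * \<gamma>) - c * Linf_norm Y powr (2 * \<gamma>))"
      unfolding Let_def Y_def[symmetric] \<Theta>_def[symmetric] I_def[symmetric] LHS RHS by simp
  qed
qed


lemma sq_powr_half: "0 \<le> (x::real) \<Longrightarrow> (x powr (1/2))\<^sup>2 = x"
  using powr_inv_pow[of x 2] by simp

lemma four_powr_quarter: "0 \<le> (x::real) \<Longrightarrow> (x powr (1/4)) ^ 4 = x"
  using powr_inv_pow[of x 4] by simp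

lemma frac_aux0: "0 < (w::real) \<Longrightarrow> 0 < lam \<Longrightarrow> (1 / w) / ((1 / w) + lam) = 1 / (1 + lam * w)"
proof -
  assume w: "0 < w" and l: "0 < lam"
  have "(1 / w) / ((1 / w) + lam) = (1 / w) / ((1 + lam * w) / w)" using w by (simp add: field_simps)
  also have "\<dots> = 1 / (1 + lam * w)" using w l by (simp add: add_pos_pos)
  finally show ?thesis .
qed

lemma frac_aux: "0 < (w::real) \<Longrightarrow> 0 < lam \<Longrightarrow> x = 1 / w \<Longrightarrow> x / (x + lam) = 1 / (1 + lam * w)"
  using frac_aux0 by blast

lemma theta_interp:
  fixes \<alpha> CG :: real and D :: "int^'d::finite \<Rightarrow> complex"
  assumes al: "real CARD('d) / 2 < \<alpha>" and CG: "CG > 0"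
    and G: "\<And>lam N. 0 < lam \<Longrightarrow> lam \<le> 1 \<Longrightarrow>
     (\<Sum>n\<in>(freq_ball N :: (int^'d) set). 1 / (1 + lam * jbr n powr (2*\<alpha>))) \<le> CG * lam powr (- (real CARD('d) / (2*\<alpha>)))"
  defines "th \<equiv> real CARD('d) / (2*\<alpha>)"
  shows "(\<Sum>n\<in>freq_ball N. cmod (symc (bessel_pot (- \<alpha>) D) n))\<^sup>2
     \<le> 2 * CG * (torus_int (\<lambda>x. (trig_poly N (bessel_pot (- \<alpha>) D) x)\<^sup>2)) powr (1 - th)
         * (torus_int (\<lambda>x. (trig_poly N D x)\<^sup>2)) powr th"
proof -
  have d: "0 < real CARD('d)" by simp
  have a0: "0 < \<alpha>" using al d by linarith
  have th: "0 < th" "th < 1" unfolding th_def using al a0 by (auto simp: field_simps)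
  define b where "b n = cmod (symc D n)" for n
  define v where "v n = jbr n powr (- \<alpha>)" for n :: "int^'d"
  have v0: "0 < v n" for n unfolding v_def using jbr_pos[of n] by simp
  have v1: "v n \<le> 1" for n
  proof -
    have "1 \<le> jbr n powr \<alpha>" using jbr_ge1[of n] a0 by (intro ge_one_powr_ge_zero) auto
    then have "1 / jbr n powr \<alpha> \<le> 1" by (auto simp: divide_le_eq_1)
    then show ?thesis unfolding v_def by (simp add: powr_minus_divide)
  qed
  have cm: "cmod (symc (bessel_pot (- \<alpha>) D) n) = b n * v n" for n
    unfolding symc_bessel b_def v_def by (simp add: norm_mult)
  have "(\<Sum>n\<in>freq_ball N. b n * v n)\<^sup>2 \<le> 2 * CG * (\<Sum>n\<in>freq_ball N. (b n * v n)\<^sup>2) powr (1 - th) * (\<Sum>n\<in>freq_ball N. (b n)\<^sup>2) powr th"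
  proof (rule interp_abstract[OF finite_freq_ball _ v0 v1 CG th])
    show "0 \<le> b n" for n unfolding b_def by simp
    fix lam :: real assume lam: "0 < lam" "lam \<le> 1"
    have "(v n)\<^sup>2 / ((v n)\<^sup>2 + lam) = 1 / (1 + lam * jbr n powr (2*\<alpha>))" for n
    proof -
      define w where "w = jbr n powr (2*\<alpha>)"
      have w: "0 < w" unfolding w_def using jbr_pos[of n] by simp
      have "(v n)\<^sup>2 = jbr n powr (of_nat 2 * (- \<alpha>))" unfolding v_def
        by (rule powr_power) (use jbr_pos[of n] in auto)
      also have "\<dots> = 1 / w" unfolding w_def by (simp add: powr_minus_divide)
      finally have "(v n)\<^sup>2 = 1 / w" .
      then show ?thesis using frac_aux[OF w lam(1)] by (simp add: w_def)
    qed
    then show "(\<Sum>n\<in>freq_ball N. (v n)\<^sup>2 / ((v n)\<^sup>2 + lam)) \<le> CG * lam powr (- th)"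
      using G[OF lam, of N] unfolding th_def by simp
  qed
  moreover have "torus_int (\<lambda>x. (trig_poly N (bessel_pot (- \<alpha>) D) x)\<^sup>2) = (\<Sum>n\<in>freq_ball N. (b n * v n)\<^sup>2)"
    unfolding parseval cm ..
  moreover have "torus_int (\<lambda>x. (trig_poly N D x)\<^sup>2) = (\<Sum>n\<in>freq_ball N. (b n)\<^sup>2)"
    unfolding parseval b_def ..
  ultimately show ?thesis unfolding cm by simp
qed


lemma tint_lin:
  fixes f :: "real^'d::finite \<Rightarrow> real"
  assumes "continuous_on UNIV f"
  shows "torus_int (\<lambda>x. a + b * f x) = a + b * torus_int f"
proof -
  have "torus_int (\<lambda>x. a + b * f x) = torus_int (\<lambda>x::real^'d. a) + torus_int (\<lambda>x. b * f x)"
    by (rule tint_add) (auto intro!: continuous_intros assms)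
  also have "\<dots> = a + b * torus_int f" by (simp only: tint_const tint_cmult)
  finally show ?thesis .
qed

lemma pw1: "\<bar>y\<bar> \<le> (L::real) \<Longrightarrow> \<bar>y ^ 3 * t\<bar> \<le> 10^6 * L ^ 6 + 1 / 100 * t\<^sup>2"
proof -
  assume yl: "\<bar>y\<bar> \<le> L"
  then have L0: "0 \<le> L" by linarith
  have "\<bar>y ^ 3 * t\<bar> = \<bar>y\<bar> ^ 3 * \<bar>t\<bar>" by (simp add: abs_mult power_abs)
  also have "\<dots> \<le> L ^ 3 * \<bar>t\<bar>" using yl by (intro mult_right_mono power_mono) auto
  also have "\<dots> \<le> 25 * L ^ 6 + 1 / 100 * t\<^sup>2"
  proof -
    have "0 \<le> (5 * L ^ 3 - \<bar>t\<bar> / 10)\<^sup>2" by simp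
    then show ?thesis by (simp add: power2_eq_square algebra_simps power_abs)
  qed
  also have "\<dots> \<le> 10^6 * L ^ 6 + 1 / 100 * t\<^sup>2" using L0 by simp
  finally show ?thesis .
qed

lemma pw3: "\<bar>y\<bar> \<le> (L::real) \<Longrightarrow> \<bar>y * t ^ 3\<bar> \<le> 10^6 * L ^ 4 + 1 / 100 * t ^ 4"
proof -
  assume yl: "\<bar>y\<bar> \<le> L"
  then have L0: "0 \<le> L" by linarith
  have "\<bar>y * t ^ 3\<bar> = \<bar>y\<bar> * \<bar>t\<bar> ^ 3" by (simp add: abs_mult power_abs)
  also have "\<dots> \<le> L * \<bar>t\<bar> ^ 3" using yl by (intro mult_right_mono) auto
  also have "\<dots> \<le> 10^6 * L ^ 4 + 1 / 100 * t ^ 4"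
  proof (cases "100 * L \<le> \<bar>t\<bar>")
    case True
    then have "L * \<bar>t\<bar> ^ 3 \<le> (\<bar>t\<bar> / 100) * \<bar>t\<bar> ^ 3" by (intro mult_right_mono) auto
    also have "\<dots> = 1 / 100 * t ^ 4"
    proof -
      have "\<bar>t\<bar> * \<bar>t\<bar> ^ 3 = \<bar>t\<bar> ^ 4" by (simp add: power4_eq_xxxx power3_eq_cube)
      also have "\<bar>t\<bar> ^ 4 = t ^ 4" by (rule power_even_abs) simp
      finally show ?thesis by simp
    qed
    finally have "L * \<bar>t\<bar> ^ 3 \<le> 1 / 100 * t ^ 4" .
    moreover have "0 \<le> (10::real)^6 * L ^ 4" using L0 by simp
    ultimately show ?thesis by linarith
  next
    case False
    then have "\<bar>t\<bar> ^ 3 \<le> (100 * L) ^ 3" by (intro power_mono) auto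
    then have "L * \<bar>t\<bar> ^ 3 \<le> L * (100 * L) ^ 3" using L0 by (intro mult_left_mono) auto
    also have "\<dots> = 10^6 * L ^ 4" by (simp add: power_mult_distrib power4_eq_xxxx power3_eq_cube)
    finally have "L * \<bar>t\<bar> ^ 3 \<le> 10^6 * L ^ 4" .
    moreover have "0 \<le> 1 / 100 * t ^ 4" by (simp add: zero_le_even_power)
    ultimately show ?thesis by linarith
  qed
  finally show ?thesis .
qed

lemma part_i:
  fixes \<alpha> :: real
  assumes al: "real CARD('d::finite) / 2 < \<alpha>"
  shows "\<exists>c>0. \<exists>A0. \<forall>A\<ge>A0. \<forall>(N::nat) (b :: int ^ 'd \<Rightarrow> complex) (\<theta> :: real \<Rightarrow> real ^ 'd \<Rightarrow> real).
        hermitian b \<and> drift_path \<theta> \<longrightarrow>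
        (let Y = Y_N \<alpha> N b; \<Theta> = Theta_N \<alpha> N \<theta> in
          \<bar>torus_int (\<lambda>x. (Y x) ^ 3 * \<Theta> x)\<bar>
             \<le> c * Linf_norm Y ^ 6 + 1 / 100 * Lp_norm 2 \<Theta> ^ 2
        \<and> \<bar>torus_int (\<lambda>x. (Y x) ^ 2 * (\<Theta> x) ^ 2)\<bar>
             \<le> c * Linf_norm Y ^ 4 + 1 / 100 * Lp_norm 2 \<Theta> ^ 4
        \<and> \<bar>torus_int (\<lambda>x. Y x * (\<Theta> x) ^ 3)\<bar>
             \<le> c * Linf_norm Y ^ 4 + 1 / 100 * Lp_norm 4 \<Theta> ^ 4
        \<and> \<bar>torus_int (\<lambda>x. (\<Theta> x) ^ 4)\<bar>
             \<le> 1 / 100 * Hs_norm_tp \<alpha> N (Theta_coeff \<alpha> \<theta>) ^ 2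
                + A / 100 * Lp_norm 2 \<Theta> powr ((8 * \<alpha> - 2 * real CARD('d)) / (2 * \<alpha> - real CARD('d))))"
proof -
  obtain CG where CG: "CG > 0" and G: "\<And>lam N. 0 < lam \<Longrightarrow> lam \<le> 1 \<Longrightarrow>
     (\<Sum>n\<in>(freq_ball N :: (int^'d) set). 1 / (1 + lam * jbr n powr (2*\<alpha>))) \<le> CG * lam powr (- (real CARD('d) / (2*\<alpha>)))"
    using G_bound[OF al] by blast
  define d where "d = real CARD('d)"
  have d: "0 < d" unfolding d_def by simp
  have a0: "0 < \<alpha>" using al d unfolding d_def by linarith
  define th where "th = d / (2*\<alpha>)"
  have th: "0 < th" "th < 1" unfolding th_def using al a0 d unfolding d_def by (auto simp: field_simps)
  define K where "K = 2 * CG"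
  have K: "0 < K" unfolding K_def using CG by simp
  define A0 where "A0 = 100 * (K * 100 powr th) powr (1 / (1 - th))"
  define c :: real where "c = 10^6"
  have expo: "(8 * \<alpha> - 2 * d) / (2 * \<alpha> - d) / 2 = (2 - th) / (1 - th)"
    unfolding th_def using al a0 unfolding d_def by (simp add: field_simps)
  show ?thesis
  proof (rule exI[of _ c], intro conjI exI[of _ A0] allI impI)
    show "c > 0" unfolding c_def by simp
    fix A N and b :: "int ^ 'd \<Rightarrow> complex" and \<theta> :: "real \<Rightarrow> real ^ 'd \<Rightarrow> real"
    assume A: "A \<ge> A0"
    define D where "D = drift_coeff \<theta>"
    define Y where "Y = Y_N \<alpha> N b"
    define \<Theta> where "\<Theta> = Theta_N \<alpha> N \<theta>"
    have \<Theta>eq: "\<Theta> = trig_poly N (bessel_pot (- \<alpha>) D)"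
      unfolding \<Theta>_def Theta_N_def Theta_coeff_def D_def ..
    define L where "L = Linf_norm Y"
    define P where "P = torus_int (\<lambda>x. (\<Theta> x)\<^sup>2)"
    define Q where "Q = torus_int (\<lambda>x. (trig_poly N D x)\<^sup>2)"
    define S where "S = (\<Sum>n\<in>freq_ball N. cmod (symc (bessel_pot (- \<alpha>) D) n))"
    have cY: "continuous_on UNIV Y" unfolding Y_def Y_N_def by (rule continuous_trig_poly)
    have cT: "continuous_on UNIV \<Theta>" unfolding \<Theta>_def Theta_N_def by (rule continuous_trig_poly)
    have L0: "0 \<le> L" unfolding L_def Y_def Y_N_def by (rule linf_nonneg)
    have YL: "\<bar>Y x\<bar> \<le> L" if "x \<in> torus_box" for x
      unfolding L_def Y_def Y_N_def by (rule linf_le[OF that])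
    have TS: "\<bar>\<Theta> x\<bar> \<le> S" for x unfolding \<Theta>eq S_def by (rule trig_poly_bound)
    have P0: "0 \<le> P" unfolding P_def by (rule tint_nonneg) (auto intro!: continuous_intros cT)
    have Q0: "0 \<le> Q" unfolding Q_def by (rule tint_nonneg) (auto intro!: continuous_intros continuous_trig_poly)
    have T4: "0 \<le> torus_int (\<lambda>x. (\<Theta> x) ^ 4)"
      by (rule tint_nonneg) (auto intro!: continuous_intros cT simp: zero_le_even_power)
    have Lp2: "Lp_norm 2 \<Theta> = P powr (1/2)" unfolding Lp2_eq P_def ..
    have Lp2sq: "Lp_norm 2 \<Theta> ^ 2 = P" unfolding Lp2 using P0 by (rule sq_powr_half)
    have Lp2_4: "Lp_norm 2 \<Theta> ^ 4 = P\<^sup>2"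
    proof -
      have "Lp_norm 2 \<Theta> ^ 4 = (Lp_norm 2 \<Theta> ^ 2)\<^sup>2" by (simp add: power_mult[symmetric])
      then show ?thesis using Lp2sq by simp
    qed
    have Lp4: "Lp_norm 4 \<Theta> ^ 4 = torus_int (\<lambda>x. (\<Theta> x) ^ 4)"
      unfolding Lp4_eq using T4 by (rule four_powr_quarter)
    have Hs: "Hs_norm_tp \<alpha> N (Theta_coeff \<alpha> \<theta>) ^ 2 = Q"
      unfolding Hs_norm_tp_def Theta_coeff_def bessel_inv Lp2_eq Q_def D_def[symmetric]
      using Q0 unfolding Q_def by (rule sq_powr_half)
    have LpE: "Lp_norm 2 \<Theta> powr ((8 * \<alpha> - 2 * real CARD('d)) / (2 * \<alpha> - real CARD('d))) = P powr ((2 - th) / (1 - th))"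
      unfolding Lp2 powr_powr d_def[symmetric] expo[symmetric] by (simp add: mult.commute)
    have I1: "\<bar>torus_int (\<lambda>x. (Y x) ^ 3 * \<Theta> x)\<bar> \<le> c * L ^ 6 + 1 / 100 * P"
    proof -
      have "\<bar>torus_int (\<lambda>x. (Y x) ^ 3 * \<Theta> x)\<bar> \<le> torus_int (\<lambda>x. c * L ^ 6 + 1 / 100 * (\<Theta> x)\<^sup>2)"
      proof (rule tint_abs_le)
        show "\<bar>Y x ^ 3 * \<Theta> x\<bar> \<le> c * L ^ 6 + 1 / 100 * (\<Theta> x)\<^sup>2" if "x \<in> torus_box" for x :: "real^'d"
          unfolding c_def by (rule pw1[OF YL[OF that]])
      qed (auto intro!: continuous_intros cT cY)
      also have "\<dots> = c * L ^ 6 + 1 / 100 * P"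
        unfolding P_def by (rule tint_lin) (auto intro!: continuous_intros cT)
      finally show ?thesis .
    qed
    have I2: "\<bar>torus_int (\<lambda>x. (Y x) ^ 2 * (\<Theta> x) ^ 2)\<bar> \<le> c * L ^ 4 + 1 / 100 * P\<^sup>2"
    proof -
      have "\<bar>torus_int (\<lambda>x. (Y x) ^ 2 * (\<Theta> x) ^ 2)\<bar> \<le> torus_int (\<lambda>x. L\<^sup>2 * (\<Theta> x)\<^sup>2)"
      proof (rule tint_abs_le)
        fix x :: "real^'d" assume x: "x \<in> torus_box"
        have "(Y x)\<^sup>2 \<le> L\<^sup>2" using YL[OF x] L0 by (simp add: abs_le_square_iff[symmetric])
        then show "\<bar>(Y x) ^ 2 * (\<Theta> x) ^ 2\<bar> \<le> L\<^sup>2 * (\<Theta> x)\<^sup>2"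
          by (simp add: abs_mult mult_right_mono)
      qed (auto intro!: continuous_intros cT cY)
      also have "\<dots> = L\<^sup>2 * P" unfolding P_def by (rule tint_cmult)
      also have "\<dots> \<le> 25 * L ^ 4 + 1 / 100 * P\<^sup>2"
      proof -
        have "0 \<le> (5 * L\<^sup>2 - P / 10)\<^sup>2" by simp
        then show ?thesis by (simp add: power2_eq_square power4_eq_xxxx algebra_simps)
      qed
      also have "\<dots> \<le> c * L ^ 4 + 1 / 100 * P\<^sup>2" unfolding c_def using L0 by simp
      finally show ?thesis .
    qed
    have I3: "\<bar>torus_int (\<lambda>x. Y x * (\<Theta> x) ^ 3)\<bar> \<le> c * L ^ 4 + 1 / 100 * torus_int (\<lambda>x. (\<Theta> x) ^ 4)"
    proof -
      have "\<bar>torus_int (\<lambda>x. Y x * (\<Theta> x) ^ 3)\<bar> \<le> torus_int (\<lambda>x. c * L ^ 4 + 1 / 100 * (\<Theta> x) ^ 4)"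
      proof (rule tint_abs_le)
        show "\<bar>Y x * (\<Theta> x) ^ 3\<bar> \<le> c * L ^ 4 + 1 / 100 * (\<Theta> x) ^ 4" if "x \<in> torus_box" for x :: "real^'d"
          unfolding c_def by (rule pw3[OF YL[OF that]])
      qed (auto intro!: continuous_intros cT cY)
      also have "\<dots> = c * L ^ 4 + 1 / 100 * torus_int (\<lambda>x. (\<Theta> x) ^ 4)"
        by (rule tint_lin) (auto intro!: continuous_intros cT)
      finally show ?thesis .
    qed
    have I4: "\<bar>torus_int (\<lambda>x. (\<Theta> x) ^ 4)\<bar> \<le> 1 / 100 * Q + A / 100 * P powr ((2 - th) / (1 - th))"
    proof -
      have "\<bar>torus_int (\<lambda>x. (\<Theta> x) ^ 4)\<bar> \<le> torus_int (\<lambda>x. S\<^sup>2 * (\<Theta> x)\<^sup>2)"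
      proof (rule tint_abs_le)
        fix x :: "real^'d"
        have S0: "0 \<le> S" using TS[of x] by linarith
        have "(\<Theta> x)\<^sup>2 \<le> S\<^sup>2" using abs_le_square_iff[of "\<Theta> x" S] TS[of x] S0 by simp
        then have "(\<Theta> x)\<^sup>2 * (\<Theta> x)\<^sup>2 \<le> S\<^sup>2 * (\<Theta> x)\<^sup>2" by (intro mult_right_mono) auto
        moreover have "\<bar>(\<Theta> x) ^ 4\<bar> = (\<Theta> x) ^ 4" by (simp add: zero_le_even_power)
        moreover have "(\<Theta> x) ^ 4 = (\<Theta> x)\<^sup>2 * (\<Theta> x)\<^sup>2" by (simp add: power4_eq_xxxx power2_eq_square)
        ultimately show "\<bar>(\<Theta> x) ^ 4\<bar> \<le> S\<^sup>2 * (\<Theta> x)\<^sup>2" by linarith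
      qed (auto intro!: continuous_intros cT)
      also have "\<dots> = S\<^sup>2 * P" unfolding P_def by (rule tint_cmult)
      also have "\<dots> \<le> (K * P powr (1 - th) * Q powr th) * P"
      proof (rule mult_right_mono[OF _ P0])
        have "S\<^sup>2 \<le> 2 * CG * P powr (1 - th) * Q powr th"
          unfolding S_def P_def Q_def \<Theta>eq th_def d_def by (rule theta_interp[OF al CG G])
        then show "S\<^sup>2 \<le> K * P powr (1 - th) * Q powr th" unfolding K_def .
      qed
      also have "\<dots> = K * P powr (2 - th) * Q powr th"
      proof (cases "P = 0")
        case True then show ?thesis by simp
      next
        case False
        then have "P powr (1 - th) * P = P powr (2 - th)" using P0 by (simp add: powr_add[symmetric] powr_mult_base mult.commute)
        then show ?thesis by (simp add: algebra_simps)
      qed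
      also have "\<dots> \<le> Q / 100 + (K * 100 powr th) powr (1 / (1 - th)) * P powr ((2 - th) / (1 - th))"
        by (rule young_step[OF K th P0 Q0])
      also have "(K * 100 powr th) powr (1 / (1 - th)) = A0 / 100" unfolding A0_def by simp
      also have "A0 / 100 * P powr ((2 - th) / (1 - th)) \<le> A / 100 * P powr ((2 - th) / (1 - th))"
        using A by (intro mult_right_mono) auto
      finally show ?thesis by simp
    qed
    show "(let Y = Y_N \<alpha> N b; \<Theta> = Theta_N \<alpha> N \<theta> in
          \<bar>torus_int (\<lambda>x. (Y x) ^ 3 * \<Theta> x)\<bar>
             \<le> c * Linf_norm Y ^ 6 + 1 / 100 * Lp_norm 2 \<Theta> ^ 2
        \<and> \<bar>torus_int (\<lambda>x. (Y x) ^ 2 * (\<Theta> x) ^ 2)\<bar>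
             \<le> c * Linf_norm Y ^ 4 + 1 / 100 * Lp_norm 2 \<Theta> ^ 4
        \<and> \<bar>torus_int (\<lambda>x. Y x * (\<Theta> x) ^ 3)\<bar>
             \<le> c * Linf_norm Y ^ 4 + 1 / 100 * Lp_norm 4 \<Theta> ^ 4
        \<and> \<bar>torus_int (\<lambda>x. (\<Theta> x) ^ 4)\<bar>
             \<le> 1 / 100 * Hs_norm_tp \<alpha> N (Theta_coeff \<alpha> \<theta>) ^ 2
                + A / 100 * Lp_norm 2 \<Theta> powr ((8 * \<alpha> - 2 * real CARD('d)) / (2 * \<alpha> - real CARD('d))))"
      unfolding Let_def Y_def[symmetric] \<Theta>_def[symmetric] L_def[symmetric] Lp2sq Lp2_4 Lp4 Hs LpE
      using I1 I2 I3 I4 by simp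
  qed
qed


theorem lemmaB1:
  fixes \<alpha> :: real
  shows "(real CARD('d::finite) / 2 < \<alpha> \<longrightarrow>
     (\<exists>c>0. \<exists>A0. \<forall>A\<ge>A0. \<forall>(N::nat) (b :: int ^ 'd \<Rightarrow> complex) (\<theta> :: real \<Rightarrow> real ^ 'd \<Rightarrow> real).
        hermitian b \<and> drift_path \<theta> \<longrightarrow>
        (let Y = Y_N \<alpha> N b; \<Theta> = Theta_N \<alpha> N \<theta> in
          \<bar>torus_int (\<lambda>x. (Y x) ^ 3 * \<Theta> x)\<bar>
             \<le> c * Linf_norm Y ^ 6 + 1 / 100 * Lp_norm 2 \<Theta> ^ 2
        \<and> \<bar>torus_int (\<lambda>x. (Y x) ^ 2 * (\<Theta> x) ^ 2)\<bar>
             \<le> c * Linf_norm Y ^ 4 + 1 / 100 * Lp_norm 2 \<Theta> ^ 4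
        \<and> \<bar>torus_int (\<lambda>x. Y x * (\<Theta> x) ^ 3)\<bar>
             \<le> c * Linf_norm Y ^ 4 + 1 / 100 * Lp_norm 4 \<Theta> ^ 4
        \<and> \<bar>torus_int (\<lambda>x. (\<Theta> x) ^ 4)\<bar>
             \<le> 1 / 100 * Hs_norm_tp \<alpha> N (Theta_coeff \<alpha> \<theta>) ^ 2
                + A / 100 * Lp_norm 2 \<Theta> powr ((8 * \<alpha> - 2 * real CARD('d)) / (2 * \<alpha> - real CARD('d))))))
   \<and> (\<forall>A>0. \<forall>\<gamma>>0. \<exists>c>0. \<forall>(N::nat) (b :: int ^ 'd \<Rightarrow> complex) (\<theta> :: real \<Rightarrow> real ^ 'd \<Rightarrow> real).
        hermitian b \<and> drift_path \<theta> \<longrightarrow>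
        (let Y = Y_N \<alpha> N b; \<Theta> = Theta_N \<alpha> N \<theta> in
          A * (torus_int (\<lambda>x. (Y x + \<Theta> x) ^ 2)) powr \<gamma>
            \<ge> A / 4 * Lp_norm 2 \<Theta> powr (2 * \<gamma>) - c * Linf_norm Y powr (2 * \<gamma>)))"
  proof (intro conjI impI allI)
  assume "real CARD('d) / 2 < \<alpha>"
  then show "\<exists>c>0. \<exists>A0. \<forall>A\<ge>A0. \<forall>(N::nat) (b :: int ^ 'd \<Rightarrow> complex) (\<theta> :: real \<Rightarrow> real ^ 'd \<Rightarrow> real).
        hermitian b \<and> drift_path \<theta> \<longrightarrow>
        (let Y = Y_N \<alpha> N b; \<Theta> = Theta_N \<alpha> N \<theta> in
          \<bar>torus_int (\<lambda>x. (Y x) ^ 3 * \<Theta> x)\<bar>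
             \<le> c * Linf_norm Y ^ 6 + 1 / 100 * Lp_norm 2 \<Theta> ^ 2
        \<and> \<bar>torus_int (\<lambda>x. (Y x) ^ 2 * (\<Theta> x) ^ 2)\<bar>
             \<le> c * Linf_norm Y ^ 4 + 1 / 100 * Lp_norm 2 \<Theta> ^ 4
        \<and> \<bar>torus_int (\<lambda>x. Y x * (\<Theta> x) ^ 3)\<bar>
             \<le> c * Linf_norm Y ^ 4 + 1 / 100 * Lp_norm 4 \<Theta> ^ 4
        \<and> \<bar>torus_int (\<lambda>x. (\<Theta> x) ^ 4)\<bar>
             \<le> 1 / 100 * Hs_norm_tp \<alpha> N (Theta_coeff \<alpha> \<theta>) ^ 2
                + A / 100 * Lp_norm 2 \<Theta> powr ((8 * \<alpha> - 2 * real CARD('d)) / (2 * \<alpha> - real CARD('d))))"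
    by (rule part_i)
next
  fix A \<gamma> :: real
  assume "A > 0" "\<gamma> > 0"
  then show "\<exists>c>0. \<forall>(N::nat) (b :: int ^ 'd \<Rightarrow> complex) (\<theta> :: real \<Rightarrow> real ^ 'd \<Rightarrow> real).
        hermitian b \<and> drift_path \<theta> \<longrightarrow>
        (let Y = Y_N \<alpha> N b; \<Theta> = Theta_N \<alpha> N \<theta> in
          A * (torus_int (\<lambda>x. (Y x + \<Theta> x) ^ 2)) powr \<gamma>
            \<ge> A / 4 * Lp_norm 2 \<Theta> powr (2 * \<gamma>) - c * Linf_norm Y powr (2 * \<gamma>))"
    by (rule part_ii)
qed

end
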